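(* Consider the $N$-node uplink system described in the context with weights $\omega_i>0$, arrival rates $\lambda_i\in(0,1]$ and success probabilities $p_i\in(0,1]$, and let $\lambda_{\min}=\min_i\lambda_i$. Let $(q^*_1,\dots,q^*_N)$ be an optimal solution of $$\min_{q_1,\dots,q_N>0}\ \frac{1}{2N}\sum_{i=1}^N\omega_i\left(\frac1{q_i}+3\right)\quad\text{s.t.}\quad\sum_{i=1}^N\frac{q_i}{p_i}\le1,\quad q_i\le\lambda_i\ \ \forall i,$$ and let $L_B=\frac{1}{2N}\sum_{i=1}^N\omega_i\left(\frac1{q^*_i}+3\right)$ be its optimal value. Let $R^{POMW}$ be the long-term expected weighted sum AoI of the POMW policy with parameters $\beta_i=\omega_i/(\lambda_iq^*_i)$. Then $$\frac{R^{POMW}}{L_B}<\frac{2}{\lambda_{\min}}.$$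
   Context: System: $N$ nodes $i=1,\dots,N$ and one access point (AP); time slots $t=0,1,2,\dots$. Node $i$ receives a status update in each slot independently with probability $\lambda_i$ (independent across nodes and slots) and keeps only the latest one. Local age: $d_{t+1,i}=1$ if an update arrives at node $i$ in slot $t$, else $d_{t+1,i}=d_{t,i}+1$. In each slot the AP schedules at most one node; a scheduled node $i$'s transmission succeeds with probability $p_i$ independently. If node $i$ is scheduled and succeeds in slot $t$, the AP observes $d_{t,i}$ and $D_{t+1,i}=d_{t,i}+1$; otherwise the AP observes nothing about $d_{t,i}$ and $D_{t+1,i}=D_{t,i}+1$. Initialization: $d_{0,i}=D_{0,i}=1$ for all $i$. Belief: $b_{t,i}(d)=\Pr(d_{t,i}=d\mid\text{AP history up to slot }t-1)$. POMW policy with parameters $\beta_i>0$: in each slot $t$ the AP computes $G_{t,i}=D_{t,i}-\sum_{d\ge1}b_{t,i}(d)\,d$ for every $i$ and schedules a node $j\in\arg\max_i\beta_ip_iG_{t,i}$. The long-term expected weighted sum AoI of a policy $\pi$ is $\lim_{T\to\infty}\frac{1}{NT}\mathbb{E}\left[\sum_{t=1}^T\sum_{i=1}^N\omega_iD_{t,i}\,\middle|\,\pi\right]$. *)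

theory Defs
  imports "HOL-Probability.Probability"
begin

(* Nodes are indexed 0..N-1 (paper: 1..N). Slots t = 0,1,2,...

   Randomness: an outcome is a pair (arrivals, successes) of boolean
   fields indexed by (slot, node):
     fst om (t,i) = an update arrives at node i in slot t  (prob lam i)
     snd om (t,i) = a transmission of node i in slot t would succeed (prob p i)
   all mutually independent.  Only the success bit of the scheduled node is
   ever used, so this is the model of the paper. *)

type_synonym outcome = "(nat \<times> nat \<Rightarrow> bool) \<times> (nat \<times> nat \<Rightarrow> bool)"

(* one AP observation in a slot: (scheduled node, Some d_{t,i} on success / None on failure) *)
type_synonym obs = "nat \<times> nat option"

(* a (deterministic, history dependent) scheduling policy of the AP *)
type_synonym policy = "nat \<Rightarrow> obs list \<Rightarrow> nat"

definition sys_pmf :: "nat \<Rightarrow> (nat \<Rightarrow> real) \<Rightarrow> (nat \<Rightarrow> real) \<Rightarrow> nat \<Rightarrow> outcome pmf" where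
  "sys_pmf N lam p T =
     pair_pmf (Pi_pmf ({..<T} \<times> {..<N}) False (\<lambda>(t,i). bernoulli_pmf (lam i)))
              (Pi_pmf ({..<T} \<times> {..<N}) False (\<lambda>(t,i). bernoulli_pmf (p i)))"

definition arrival :: "outcome \<Rightarrow> nat \<Rightarrow> nat \<Rightarrow> bool" where
  "arrival om t i = fst om (t, i)"

definition success :: "outcome \<Rightarrow> nat \<Rightarrow> nat \<Rightarrow> bool" where
  "success om t i = snd om (t, i)"

primrec local_age :: "outcome \<Rightarrow> nat \<Rightarrow> nat \<Rightarrow> nat" where
  "local_age om i 0 = 1"
| "local_age om i (Suc t) = (if arrival om t i then 1 else local_age om i t + 1)"

(* AP history up to slot t-1 (observations of slots 0..t-1) under policy pol *)
primrec hist :: "policy \<Rightarrow> outcome \<Rightarrow> nat \<Rightarrow> obs list" where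
  "hist pol om 0 = []"
| "hist pol om (Suc t) =
     (let u = pol t (hist pol om t)
      in hist pol om t @ [(u, if success om t u then Some (local_age om u t) else None)])"

primrec ap_age :: "policy \<Rightarrow> outcome \<Rightarrow> nat \<Rightarrow> nat \<Rightarrow> nat" where
  "ap_age pol om i 0 = 1"
| "ap_age pol om i (Suc t) =
     (let u = pol t (hist pol om t)
      in if u = i \<and> success om t i then local_age om i t + 1 else ap_age pol om i t + 1)"

definition belief :: "nat \<Rightarrow> (nat \<Rightarrow> real) \<Rightarrow> (nat \<Rightarrow> real) \<Rightarrow> policy
                      \<Rightarrow> nat \<Rightarrow> nat \<Rightarrow> obs list \<Rightarrow> nat \<Rightarrow> real" where
  "belief N lam p pol t i h d =
     measure_pmf.prob (sys_pmf N lam p t) {om. local_age om i t = d \<and> hist pol om t = h}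
     / measure_pmf.prob (sys_pmf N lam p t) {om. hist pol om t = h}"

(* G_{t,i} = D_{t,i} - sum_{d>=1} b_{t,i}(d) d   (the d = 0 term is 0) *)
definition gain :: "nat \<Rightarrow> (nat \<Rightarrow> real) \<Rightarrow> (nat \<Rightarrow> real) \<Rightarrow> policy
                    \<Rightarrow> outcome \<Rightarrow> nat \<Rightarrow> nat \<Rightarrow> real" where
  "gain N lam p pol om t i =
     real (ap_age pol om i t) - (\<Sum>d. belief N lam p pol t i (hist pol om t) d * real d)"

definition is_POMW :: "nat \<Rightarrow> (nat \<Rightarrow> real) \<Rightarrow> (nat \<Rightarrow> real) \<Rightarrow> (nat \<Rightarrow> real) \<Rightarrow> policy \<Rightarrow> bool" where
  "is_POMW N lam p beta pol \<longleftrightarrow>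
     (\<forall>t om. om \<in> set_pmf (sys_pmf N lam p t) \<longrightarrow>
        (let j = pol t (hist pol om t) in
           j < N \<and>
           (\<forall>i<N. beta i * p i * gain N lam p pol om t i \<le> beta j * p j * gain N lam p pol om t j)))"

definition avg_wAoI :: "nat \<Rightarrow> (nat \<Rightarrow> real) \<Rightarrow> (nat \<Rightarrow> real) \<Rightarrow> (nat \<Rightarrow> real) \<Rightarrow> policy \<Rightarrow> nat \<Rightarrow> real" where
  "avg_wAoI N w lam p pol T =
     measure_pmf.expectation (sys_pmf N lam p T)
       (\<lambda>om. \<Sum>t=1..T. \<Sum>i<N. w i * real (ap_age pol om i t)) / (real N * real T)"

(* long-term expected weighted sum AoI, taken as a limsup (equals the lim when it exists) *)
definition longterm_wAoI :: "nat \<Rightarrow> (nat \<Rightarrow> real) \<Rightarrow> (nat \<Rightarrow> real) \<Rightarrow> (nat \<Rightarrow> real) \<Rightarrow> policy \<Rightarrow> ereal" where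
  "longterm_wAoI N w lam p pol = limsup (\<lambda>T. ereal (avg_wAoI N w lam p pol T))"

definition lb_feasible :: "nat \<Rightarrow> (nat \<Rightarrow> real) \<Rightarrow> (nat \<Rightarrow> real) \<Rightarrow> (nat \<Rightarrow> real) \<Rightarrow> bool" where
  "lb_feasible N lam p q \<longleftrightarrow>
     (\<forall>i<N. 0 < q i \<and> q i \<le> lam i) \<and> (\<Sum>i<N. q i / p i) \<le> 1"

definition lb_objective :: "nat \<Rightarrow> (nat \<Rightarrow> real) \<Rightarrow> (nat \<Rightarrow> real) \<Rightarrow> real" where
  "lb_objective N w q = (\<Sum>i<N. w i * (1 / q i + 3)) / (2 * real N)"

definition lb_optimal :: "nat \<Rightarrow> (nat \<Rightarrow> real) \<Rightarrow> (nat \<Rightarrow> real) \<Rightarrow> (nat \<Rightarrow> real) \<Rightarrow> (nat \<Rightarrow> real) \<Rightarrow> bool" where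
  "lb_optimal N w lam p q \<longleftrightarrow>
     lb_feasible N lam p q \<and> (\<forall>q'. lb_feasible N lam p q' \<longrightarrow> lb_objective N w q \<le> lb_objective N w q')"

end

theory Submission
  imports Defs
begin


definition rr :: "nat \<Rightarrow> nat \<Rightarrow> (nat \<times> nat \<Rightarrow> bool) \<Rightarrow> (nat \<times> nat \<Rightarrow> bool)" where
  "rr N t f = (\<lambda>x. if x \<in> {..<t} \<times> {..<N} then f x else False)"

lemma sys_restrict:
  assumes "t \<le> T"
  shows "sys_pmf N lam p t = map_pmf (\<lambda>(a,s). (rr N t a, rr N t s)) (sys_pmf N lam p T)"
proof -
  have sub: "{..<t} \<times> {..<N} \<subseteq> {..<T} \<times> {..<N}" using assms by auto
  show ?thesis
    unfolding sys_pmf_def map_pair rr_def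
    by (subst (1 2) Pi_pmf_subset[OF _ sub]) auto
qed

lemma sys_set_dflt:
  assumes "om \<in> set_pmf (sys_pmf N lam p T)" "x \<notin> {..<T} \<times> {..<N}"
  shows "\<not> fst om x \<and> \<not> snd om x"
  using assms set_Pi_pmf_subset[of "{..<T} \<times> {..<N}"]
  unfolding sys_pmf_def by (cases om) fastforce

lemma sys_finite: "finite (set_pmf (sys_pmf N lam p T))"
proof -
  have fb: "\<And>q::bool pmf. finite (set_pmf q)" by (rule finite_subset[OF subset_UNIV]) simp
  have "\<And>r. finite (set_pmf (Pi_pmf ({..<T} \<times> {..<N}) False r))"
    by (rule finite_subset[OF set_Pi_pmf_subset']) (auto intro!: finite_PiE_dflt fb)
  then show ?thesis unfolding sys_pmf_def by simp
qed

lemma E_mono_pmf: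
  fixes f g :: "'a \<Rightarrow> real"
  assumes "finite (set_pmf M)" "\<And>x. x \<in> set_pmf M \<Longrightarrow> f x \<le> g x"
  shows "measure_pmf.expectation M f \<le> measure_pmf.expectation M g"
  using assms by (intro integral_mono_AE) (auto simp: integrable_measure_pmf_finite AE_measure_pmf_iff)

lemma E_cong_pmf:
  fixes f g :: "'a \<Rightarrow> real"
  assumes "\<And>x. x \<in> set_pmf M \<Longrightarrow> f x = g x"
  shows "measure_pmf.expectation M f = measure_pmf.expectation M g"
  using assms by (intro integral_cong_AE) (auto simp: AE_measure_pmf_iff)

lemma E_pair_prod:
  fixes f g :: "_ \<Rightarrow> real"
  assumes "finite (set_pmf A)" "finite (set_pmf B)"
  shows "measure_pmf.expectation (pair_pmf A B) (\<lambda>z. f (fst z) * g (snd z))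
        = measure_pmf.expectation A f * measure_pmf.expectation B g"
proof -
  have pp: "\<And>z. pmf (pair_pmf A B) z = pmf A (fst z) * pmf B (snd z)"
    by (case_tac z) (simp add: pmf_pair)
  have "measure_pmf.expectation (pair_pmf A B) (\<lambda>z. f (fst z) * g (snd z))
      = (\<Sum>z\<in>set_pmf A \<times> set_pmf B. f (fst z) * g (snd z) * pmf (pair_pmf A B) z)"
    using assms by (intro integral_measure_pmf_real) auto
  also have "\<dots> = (\<Sum>a\<in>set_pmf A. \<Sum>b\<in>set_pmf B. (f a * pmf A a) * (g b * pmf B b))"
    using pp by (simp add: sum.cartesian_product case_prod_unfold mult_ac)
  also have "\<dots> = (\<Sum>a\<in>set_pmf A. f a * pmf A a) * (\<Sum>b\<in>set_pmf B. g b * pmf B b)"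
    by (simp add: sum_product)
  also have "\<dots> = measure_pmf.expectation A f * measure_pmf.expectation B g"
    using assms by (simp add: integral_measure_pmf_real)
  finally show ?thesis .
qed

lemma indep_gen:
  fixes f :: "'b \<Rightarrow> real" and g :: "'a \<Rightarrow> real"
  assumes M: "M = map_pmf (\<lambda>(y,w). h y w) (pair_pmf B W)"
    and fin: "finite (set_pmf B)" "finite (set_pmf W)"
    and c: "\<And>y w. c (h y w) = y"
    and g: "\<And>y y' w. g (h y w) = g (h y' w)"
  shows "measure_pmf.expectation M (\<lambda>om. f (c om) * g om)
       = measure_pmf.expectation B f * measure_pmf.expectation M g"
proof -
  define y0 :: 'b where "y0 = undefined"
  define g' where "g' w = g (h y0 w)" for w
  have gg: "g (h y w) = g' w" for y w unfolding g'_def by (rule g)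
  have "measure_pmf.expectation M (\<lambda>om. f (c om) * g om)
      = measure_pmf.expectation (pair_pmf B W) (\<lambda>z. f (fst z) * g' (snd z))"
    unfolding M integral_map_pmf by (intro Bochner_Integration.integral_cong refl) (auto simp: case_prod_unfold c gg)
  also have "\<dots> = measure_pmf.expectation B f * measure_pmf.expectation W g'"
    by (rule E_pair_prod[OF fin])
  also have "measure_pmf.expectation W g' = measure_pmf.expectation (pair_pmf B W) (\<lambda>z. g' (snd z))"
    by (rule expectation_pair_pmf_snd[symmetric])
  also have "\<dots> = measure_pmf.expectation M g"
    unfolding M integral_map_pmf
    by (intro Bochner_Integration.integral_cong refl) (auto simp: case_prod_unfold gg)
  finally show ?thesis .
qed

lemma E_bern: "0 \<le> q \<Longrightarrow> q \<le> 1 \<Longrightarrow> measure_pmf.expectation (bernoulli_pmf q) (\<lambda>b. if b then 1 else 0) = q"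
  by (subst integral_measure_pmf_real[where A=UNIV]) (auto simp: UNIV_bool)



definition agree :: "nat \<Rightarrow> outcome \<Rightarrow> outcome \<Rightarrow> bool" where
  "agree t om om' \<longleftrightarrow> (\<forall>s<t. \<forall>i. fst om (s,i) = fst om' (s,i) \<and> snd om (s,i) = snd om' (s,i))"

lemma agree_mono: "agree t om om' \<Longrightarrow> s \<le> t \<Longrightarrow> agree s om om'"
  unfolding agree_def by auto

lemma agree_local: "agree t om om' \<Longrightarrow> local_age om i t = local_age om' i t"
proof (induction t)
  case (Suc t)
  then have "agree t om om'" by (auto intro: agree_mono)
  with Suc show ?case by (auto simp: agree_def arrival_def)
qed simp

lemma agree_hist: "agree t om om' \<Longrightarrow> hist pol om t = hist pol om' t"
proof (induction t)
  case (Suc t)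
  then have a: "agree t om om'" by (auto intro: agree_mono)
  with Suc have h: "hist pol om t = hist pol om' t" by auto
  have "success om t u = success om' t u" for u using Suc.prems by (auto simp: agree_def success_def)
  with h a show ?case by (simp add: Let_def agree_local)
qed simp

lemma agree_ap: "agree t om om' \<Longrightarrow> ap_age pol om i t = ap_age pol om' i t"
proof (induction t)
  case (Suc t)
  then have a: "agree t om om'" by (auto intro: agree_mono)
  with Suc have h: "ap_age pol om i t = ap_age pol om' i t" by auto
  have "success om t u = success om' t u" for u using Suc.prems by (auto simp: agree_def success_def)
  with h a show ?case by (simp add: Let_def agree_local agree_hist)
qed simp

lemma agree_gain: "agree t om om' \<Longrightarrow> gain N lam p pol om t i = gain N lam p pol om' t i"
  unfolding gain_def by (simp add: agree_ap agree_hist)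

lemma agree_upd_fst: "s \<ge> t \<Longrightarrow> agree t (a, c) (a((s,i):=b), c)"
  unfolding agree_def by simp

lemma agree_upd_snd: "s \<ge> t \<Longrightarrow> agree t (a, c) (a, c((s,i):=b))"
  unfolding agree_def by simp

lemma agree_restrict:
  assumes "om \<in> set_pmf (sys_pmf N lam p T)" "t \<le> T"
  shows "agree t om (rr N t (fst om), rr N t (snd om))"
  unfolding agree_def
proof (intro allI impI)
  fix s i assume st: "s < t"
  show "fst om (s, i) = fst (rr N t (fst om), rr N t (snd om)) (s, i) \<and>
        snd om (s, i) = snd (rr N t (fst om), rr N t (snd om)) (s, i)"
  proof (cases "i < N")
    case False
    then have "(s,i) \<notin> {..<T} \<times> {..<N}" by simp
    from sys_set_dflt[OF assms(1) this] False show ?thesis by (simp add: rr_def)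
  next
    case True
    with st show ?thesis by (simp add: rr_def)
  qed
qed

lemma restrict_in_set:
  assumes "om \<in> set_pmf (sys_pmf N lam p T)" "t \<le> T"
  shows "(rr N t (fst om), rr N t (snd om)) \<in> set_pmf (sys_pmf N lam p t)"
  unfolding sys_restrict[OF assms(2), of N lam p] set_map_pmf
  by (rule rev_image_eqI[OF assms(1)]) (simp add: case_prod_unfold)

lemma E_restrict:
  fixes F :: "outcome \<Rightarrow> real"
  assumes "t \<le> T" "\<And>om om'. agree t om om' \<Longrightarrow> F om = F om'"
  shows "measure_pmf.expectation (sys_pmf N lam p t) F = measure_pmf.expectation (sys_pmf N lam p T) F"
proof -
  have "measure_pmf.expectation (sys_pmf N lam p t) F =
        measure_pmf.expectation (sys_pmf N lam p T) (\<lambda>om. F (rr N t (fst om), rr N t (snd om)))"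
    by (subst sys_restrict[OF assms(1)]) (simp add: case_prod_unfold)
  also have "\<dots> = measure_pmf.expectation (sys_pmf N lam p T) F"
    by (intro E_cong_pmf, rule sym, rule assms(2)[OF agree_restrict[OF _ assms(1)]])
  finally show ?thesis .
qed

lemma local_ge1: "1 \<le> local_age om i t"
  by (induction t) auto

lemma local_le: "local_age om i t \<le> t + 1"
  by (induction t) auto

lemma local_le_ap: "local_age om i t \<le> ap_age pol om i t"
  by (induction t) (auto simp: Let_def)

lemma hist_ap: "hist pol om t = hist pol om' t \<Longrightarrow> ap_age pol om i t = ap_age pol om' i t"
proof (induction t)
  case (Suc t)
  define u where "u = pol t (hist pol om t)"
  have h: "hist pol om t = hist pol om' t"
    using Suc.prems by (simp add: Let_def)
  have u': "pol t (hist pol om' t) = u" using h u_def by simp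
  have "hist pol om t @ [(u, if success om t u then Some (local_age om u t) else None)]
     = hist pol om' t @ [(u, if success om' t u then Some (local_age om' u t) else None)]"
    using Suc.prems unfolding hist.simps Let_def u_def[symmetric] u' .
  then have l: "(if success om t u then Some (local_age om u t) else None)
       = (if success om' t u then Some (local_age om' u t) else None)"
    by simp
  from l have "success om t u = success om' t u"
    by (cases "success om t u"; cases "success om' t u") auto
  moreover from l have "success om t u \<Longrightarrow> local_age om u t = local_age om' u t"
    by (cases "success om t u"; cases "success om' t u") auto
  ultimately show ?case using Suc.IH[OF h] unfolding ap_age.simps Let_def u_def[symmetric] u'
    by auto
qed simp



lemma fin_bool_pmf: "finite (set_pmf (q :: bool pmf))"
  by (rule finite_subset[OF subset_UNIV]) simp

lemma fin_Pi_bool: "finite A \<Longrightarrow> finite (set_pmf (Pi_pmf A False (r :: _ \<Rightarrow> bool pmf)))"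
  by (rule finite_subset[OF set_Pi_pmf_subset']) (auto intro!: finite_PiE_dflt fin_bool_pmf)

lemma sys_decomp_fst:
  assumes "x \<in> {..<H} \<times> {..<N}"
  shows "sys_pmf N lam p H = map_pmf (\<lambda>(y,w). ((fst w)(x:=y), snd w))
     (pair_pmf (bernoulli_pmf (lam (snd x)))
        (pair_pmf (Pi_pmf ({..<H} \<times> {..<N} - {x}) False (\<lambda>(t,i). bernoulli_pmf (lam i)))
                  (Pi_pmf ({..<H} \<times> {..<N}) False (\<lambda>(t,i). bernoulli_pmf (p i)))))"
proof -
  have D: "{..<H} \<times> {..<N} = insert x ({..<H} \<times> {..<N} - {x})" using assms by auto
  show ?thesis
    unfolding sys_pmf_def
    apply (subst (1) D)
    apply (subst Pi_pmf_insert)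
      apply simp apply simp
    apply (simp add: pair_map_pmf1 pair_pair_pmf map_pmf_comp case_prod_unfold)
    done
qed

lemma sys_decomp_snd:
  assumes "x \<in> {..<H} \<times> {..<N}"
  shows "sys_pmf N lam p H = map_pmf (\<lambda>(y,w). (snd w, (fst w)(x:=y)))
     (pair_pmf (bernoulli_pmf (p (snd x)))
        (pair_pmf (Pi_pmf ({..<H} \<times> {..<N} - {x}) False (\<lambda>(t,i). bernoulli_pmf (p i)))
                  (Pi_pmf ({..<H} \<times> {..<N}) False (\<lambda>(t,i). bernoulli_pmf (lam i)))))"
proof -
  have D: "{..<H} \<times> {..<N} = insert x ({..<H} \<times> {..<N} - {x})" using assms by auto
  show ?thesis
    unfolding sys_pmf_def
    apply (subst pair_commute_pmf)
    apply (subst (1) D)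
    apply (subst Pi_pmf_insert)
      apply simp apply simp
    apply (simp add: pair_map_pmf1 pair_pair_pmf map_pmf_comp case_prod_unfold)
    done
qed

lemma indep_fst:
  fixes g :: "outcome \<Rightarrow> real"
  assumes x: "(t,i) \<in> {..<H} \<times> {..<N}" and l: "0 \<le> lam i" "lam i \<le> 1"
    and g: "\<And>a c b. g (a((t,i):=b), c) = g (a, c)"
  shows "measure_pmf.expectation (sys_pmf N lam p H) (\<lambda>om. (if fst om (t,i) then 1 else 0) * g om)
       = lam i * measure_pmf.expectation (sys_pmf N lam p H) g"
proof -
  have "measure_pmf.expectation (sys_pmf N lam p H) (\<lambda>om. (\<lambda>b. if b then 1 else 0) (fst om (t,i)) * g om)
     = measure_pmf.expectation (bernoulli_pmf (lam (snd (t,i)))) (\<lambda>b. if b then 1 else 0)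
       * measure_pmf.expectation (sys_pmf N lam p H) g"
    apply (rule indep_gen[OF sys_decomp_fst[OF x]])
    by (auto simp: fin_bool_pmf fin_Pi_bool g)
  then show ?thesis using E_bern[OF l] by simp
qed

lemma indep_snd:
  fixes g :: "outcome \<Rightarrow> real"
  assumes x: "(t,i) \<in> {..<H} \<times> {..<N}" and l: "0 \<le> p i" "p i \<le> 1"
    and g: "\<And>a c b. g (a, c((t,i):=b)) = g (a, c)"
  shows "measure_pmf.expectation (sys_pmf N lam p H) (\<lambda>om. (if snd om (t,i) then 1 else 0) * g om)
       = p i * measure_pmf.expectation (sys_pmf N lam p H) g"
proof -
  have "measure_pmf.expectation (sys_pmf N lam p H) (\<lambda>om. (\<lambda>b. if b then 1 else 0) (snd om (t,i)) * g om)
     = measure_pmf.expectation (bernoulli_pmf (p (snd (t,i)))) (\<lambda>b. if b then 1 else 0)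
       * measure_pmf.expectation (sys_pmf N lam p H) g"
    apply (rule indep_gen[OF sys_decomp_snd[OF x]])
    by (auto simp: fin_bool_pmf fin_Pi_bool g)
  then show ?thesis using E_bern[OF l] by simp
qed



lemma prob_sum_fin:
  assumes "finite (set_pmf M)"
  shows "measure_pmf.prob M X = sum (pmf M) (set_pmf M \<inter> X)"
  by (metis assms measure_Int_set_pmf measure_measure_pmf_finite Int_commute finite_Int)

lemma E_sum_fin:
  fixes F :: "_ \<Rightarrow> real"
  assumes "finite (set_pmf M)"
  shows "measure_pmf.expectation M F = (\<Sum>om\<in>set_pmf M. F om * pmf M om)"
  using assms by (intro integral_measure_pmf_real) auto

context
  fixes N :: nat and lam p :: "nat \<Rightarrow> real" and pol :: policy and t i :: nat
begin

abbreviation "MM \<equiv> sys_pmf N lam p t"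
abbreviation "SS \<equiv> set_pmf MM"
definition "Ph h = measure_pmf.prob MM {om. hist pol om t = h}"
definition "Bf h = (\<Sum>d. belief N lam p pol t i h d * real d)"

lemma Ph_sum: "Ph h = (\<Sum>om\<in>{om\<in>SS. hist pol om t = h}. pmf MM om)"
  unfolding Ph_def by (subst prob_sum_fin[OF sys_finite]) (auto intro!: sum.cong)

lemma Ph_pos: "om \<in> SS \<Longrightarrow> 0 < Ph (hist pol om t)"
proof -
  assume om: "om \<in> SS"
  have "pmf MM om \<le> (\<Sum>om'\<in>{om'\<in>SS. hist pol om' t = hist pol om t}. pmf MM om')"
    by (rule member_le_sum) (use om sys_finite in auto)
  moreover have "0 < pmf MM om" using om by (simp add: pmf_positive)
  ultimately show ?thesis unfolding Ph_sum by linarith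
qed

lemma Bmul:
  assumes om: "om \<in> SS"
  defines "h \<equiv> hist pol om t"
  shows "Bf h * Ph h = (\<Sum>om'\<in>{om'\<in>SS. hist pol om' t = h}. pmf MM om' * real (local_age om' i t))"
proof -
  let ?X = "{om'\<in>SS. hist pol om' t = h}"
  have finX: "finite ?X" using sys_finite by auto
  have P0: "Ph h \<noteq> 0" using Ph_pos[OF om] unfolding h_def by simp
  define Q where "Q d = measure_pmf.prob MM {om. local_age om i t = d \<and> hist pol om t = h}" for d
  have Qs: "Q d = (\<Sum>om'\<in>{om'\<in>?X. local_age om' i t = d}. pmf MM om')" for d
    unfolding Q_def by (subst prob_sum_fin[OF sys_finite]) (auto intro!: sum.cong)
  have Q0: "Q d = 0" if "d \<notin> {..t+1}" for d
  proof -
    have e: "{om. local_age om i t = d \<and> hist pol om t = h} = {}"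
      using that local_le[of _ i t] by auto
    show ?thesis unfolding Q_def e by simp
  qed
  have "Bf h = (\<Sum>d. Q d / Ph h * real d)"
    unfolding Bf_def belief_def Q_def Ph_def by simp
  also have "\<dots> = (\<Sum>d\<in>{..t+1}. Q d / Ph h * real d)"
    by (rule suminf_finite) (auto simp: Q0)
  finally have "Bf h * Ph h = (\<Sum>d\<in>{..t+1}. Q d / Ph h * real d) * Ph h" by simp
  also have "\<dots> = (\<Sum>d\<in>{..t+1}. Q d * real d)"
    unfolding sum_distrib_right using P0 by (intro sum.cong refl) simp
  also have "\<dots> = (\<Sum>d\<in>{..t+1}. \<Sum>om'\<in>{om'\<in>?X. local_age om' i t = d}. pmf MM om' * real (local_age om' i t))"
    unfolding Qs sum_distrib_right by (intro sum.cong refl) auto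
  also have "\<dots> = (\<Sum>om'\<in>?X. pmf MM om' * real (local_age om' i t))"
    by (rule sum.group[OF finX]) (use local_le in auto)
  finally show ?thesis .
qed

lemma B_le_ap:
  assumes om: "om \<in> SS"
  shows "Bf (hist pol om t) \<le> real (ap_age pol om i t)"
proof -
  let ?h = "hist pol om t"
  let ?X = "{om'\<in>SS. hist pol om' t = ?h}"
  have "Bf ?h * Ph ?h = (\<Sum>om'\<in>?X. pmf MM om' * real (local_age om' i t))"
    by (rule Bmul[OF om])
  also have "\<dots> \<le> (\<Sum>om'\<in>?X. pmf MM om' * real (ap_age pol om i t))"
  proof (rule sum_mono)
    fix om' assume "om' \<in> ?X"
    then have "ap_age pol om' i t = ap_age pol om i t" by (auto intro: hist_ap)
    then show "pmf MM om' * real (local_age om' i t) \<le> pmf MM om' * real (ap_age pol om i t)"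
      using local_le_ap[of om' i t pol] by (auto intro!: mult_left_mono)
  qed
  also have "\<dots> = real (ap_age pol om i t) * Ph ?h"
    unfolding Ph_sum sum_distrib_left by (simp add: mult.commute)
  finally show ?thesis using Ph_pos[OF om] by simp
qed

lemma gain_nonneg_t: "om \<in> SS \<Longrightarrow> 0 \<le> gain N lam p pol om t i"
  using B_le_ap unfolding gain_def Bf_def by simp

lemma tower_t:
  fixes f :: "obs list \<Rightarrow> real"
  shows "measure_pmf.expectation MM (\<lambda>om. f (hist pol om t) * Bf (hist pol om t))
       = measure_pmf.expectation MM (\<lambda>om. f (hist pol om t) * real (local_age om i t))"
proof -
  let ?H = "(\<lambda>om. hist pol om t) ` SS"
  have finH: "finite ?H" using sys_finite by simp
  have "measure_pmf.expectation MM (\<lambda>om. f (hist pol om t) * Bf (hist pol om t))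
     = (\<Sum>om\<in>SS. f (hist pol om t) * Bf (hist pol om t) * pmf MM om)"
    by (rule E_sum_fin[OF sys_finite])
  also have "\<dots> = (\<Sum>h\<in>?H. \<Sum>om\<in>{om\<in>SS. hist pol om t = h}. f (hist pol om t) * Bf (hist pol om t) * pmf MM om)"
    by (rule sum.group[OF sys_finite finH, symmetric]) auto
  also have "\<dots> = (\<Sum>h\<in>?H. \<Sum>om\<in>{om\<in>SS. hist pol om t = h}. f (hist pol om t) * real (local_age om i t) * pmf MM om)"
  proof (rule sum.cong[OF refl])
    fix h assume "h \<in> ?H"
    then obtain om0 where om0: "om0 \<in> SS" "h = hist pol om0 t" by auto
    have "(\<Sum>om\<in>{om\<in>SS. hist pol om t = h}. f (hist pol om t) * Bf (hist pol om t) * pmf MM om)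
        = f h * (Bf h * Ph h)"
      unfolding Ph_sum by (simp add: sum_distrib_left mult_ac)
    also have "\<dots> = f h * (\<Sum>om'\<in>{om'\<in>SS. hist pol om' t = h}. pmf MM om' * real (local_age om' i t))"
      using Bmul[OF om0(1)] om0(2) by simp
    also have "\<dots> = (\<Sum>om\<in>{om\<in>SS. hist pol om t = h}. f (hist pol om t) * real (local_age om i t) * pmf MM om)"
      by (simp add: sum_distrib_left mult_ac)
    finally show "(\<Sum>om\<in>{om\<in>SS. hist pol om t = h}. f (hist pol om t) * Bf (hist pol om t) * pmf MM om)
        = (\<Sum>om\<in>{om\<in>SS. hist pol om t = h}. f (hist pol om t) * real (local_age om i t) * pmf MM om)" .
  qed
  also have "\<dots> = (\<Sum>om\<in>SS. f (hist pol om t) * real (local_age om i t) * pmf MM om)"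
    by (rule sum.group[OF sys_finite finH]) auto
  also have "\<dots> = measure_pmf.expectation MM (\<lambda>om. f (hist pol om t) * real (local_age om i t))"
    by (rule E_sum_fin[OF sys_finite, symmetric])
  finally show ?thesis .
qed

lemma tower_gain_t:
  fixes f :: "obs list \<Rightarrow> real"
  shows "measure_pmf.expectation MM (\<lambda>om. f (hist pol om t) * gain N lam p pol om t i)
       = measure_pmf.expectation MM (\<lambda>om. f (hist pol om t) * (real (ap_age pol om i t) - real (local_age om i t)))"
proof -
  have I: "integrable MM F" for F :: "outcome \<Rightarrow> real" by (rule integrable_measure_pmf_finite[OF sys_finite])
  have "measure_pmf.expectation MM (\<lambda>om. f (hist pol om t) * gain N lam p pol om t i)
     = measure_pmf.expectation MM (\<lambda>om. f (hist pol om t) * real (ap_age pol om i t) - f (hist pol om t) * Bf (hist pol om t))"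
    unfolding gain_def Bf_def by (simp add: right_diff_distrib)
  also have "\<dots> = measure_pmf.expectation MM (\<lambda>om. f (hist pol om t) * real (ap_age pol om i t))
       - measure_pmf.expectation MM (\<lambda>om. f (hist pol om t) * Bf (hist pol om t))"
    by (rule Bochner_Integration.integral_diff[OF I I])
  also have "\<dots> = measure_pmf.expectation MM (\<lambda>om. f (hist pol om t) * real (ap_age pol om i t))
       - measure_pmf.expectation MM (\<lambda>om. f (hist pol om t) * real (local_age om i t))"
    by (simp add: tower_t)
  also have "\<dots> = measure_pmf.expectation MM (\<lambda>om. f (hist pol om t) * (real (ap_age pol om i t) - real (local_age om i t)))"
    unfolding right_diff_distrib by (rule Bochner_Integration.integral_diff[OF I I, symmetric])
  finally show ?thesis .
qed

end



lemma gain_nonneg: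
  assumes "om \<in> set_pmf (sys_pmf N lam p H)" "t \<le> H"
  shows "0 \<le> gain N lam p pol om t i"
proof -
  let ?om' = "(rr N t (fst om), rr N t (snd om))"
  have "gain N lam p pol om t i = gain N lam p pol ?om' t i"
    by (rule agree_gain[OF agree_restrict[OF assms]])
  also have "0 \<le> \<dots>" by (rule gain_nonneg_t[OF restrict_in_set[OF assms]])
  finally show ?thesis by simp
qed

lemma tower_gain:
  fixes f :: "obs list \<Rightarrow> real"
  assumes "t \<le> H"
  shows "measure_pmf.expectation (sys_pmf N lam p H) (\<lambda>om. f (hist pol om t) * gain N lam p pol om t i)
       = measure_pmf.expectation (sys_pmf N lam p H) (\<lambda>om. f (hist pol om t) * (real (ap_age pol om i t) - real (local_age om i t)))"
proof -
  have "measure_pmf.expectation (sys_pmf N lam p H) (\<lambda>om. f (hist pol om t) * gain N lam p pol om t i)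
      = measure_pmf.expectation (sys_pmf N lam p t) (\<lambda>om. f (hist pol om t) * gain N lam p pol om t i)"
    by (rule E_restrict[OF assms, symmetric]) (simp add: agree_hist agree_gain)
  also have "\<dots> = measure_pmf.expectation (sys_pmf N lam p t) (\<lambda>om. f (hist pol om t) * (real (ap_age pol om i t) - real (local_age om i t)))"
    by (rule tower_gain_t)
  also have "\<dots> = measure_pmf.expectation (sys_pmf N lam p H) (\<lambda>om. f (hist pol om t) * (real (ap_age pol om i t) - real (local_age om i t)))"
    by (rule E_restrict[OF assms]) (simp add: agree_hist agree_ap agree_local)
  finally show ?thesis .
qed

lemma pomw_H:
  assumes "is_POMW N lam p beta pol" "om \<in> set_pmf (sys_pmf N lam p H)" "t \<le> H"
  shows "pol t (hist pol om t) < N \<and>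
    (\<forall>i<N. beta i * p i * gain N lam p pol om t i
       \<le> beta (pol t (hist pol om t)) * p (pol t (hist pol om t)) * gain N lam p pol om t (pol t (hist pol om t)))"
proof -
  let ?om' = "(rr N t (fst om), rr N t (snd om))"
  have a: "agree t om ?om'" by (rule agree_restrict[OF assms(2,3)])
  have "?om' \<in> set_pmf (sys_pmf N lam p t)" by (rule restrict_in_set[OF assms(2,3)])
  with assms(1) have "let j = pol t (hist pol ?om' t) in j < N \<and>
           (\<forall>i<N. beta i * p i * gain N lam p pol ?om' t i \<le> beta j * p j * gain N lam p pol ?om' t j)"
    unfolding is_POMW_def by blast
  then show ?thesis
    unfolding Let_def agree_hist[OF a, symmetric] agree_gain[OF a, symmetric] .
qed

lemma E_const_pmf: "measure_pmf.expectation M (\<lambda>_. c) = (c::real)"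
  by simp

lemma E_lin3:
  fixes a b :: "_ \<Rightarrow> real"
  assumes "finite (set_pmf M)"
  shows "measure_pmf.expectation M (\<lambda>om. a om + 1 - b om) = measure_pmf.expectation M a + 1 - measure_pmf.expectation M b"
proof -
  have I: "integrable M F" for F :: "_ \<Rightarrow> real" by (rule integrable_measure_pmf_finite[OF assms])
  have "measure_pmf.expectation M (\<lambda>om. a om + 1 - b om) = measure_pmf.expectation M (\<lambda>om. a om + 1) - measure_pmf.expectation M b"
    by (rule Bochner_Integration.integral_diff[OF I I])
  also have "measure_pmf.expectation M (\<lambda>om. a om + 1) = measure_pmf.expectation M a + measure_pmf.expectation M (\<lambda>_. 1)"
    by (rule Bochner_Integration.integral_add[OF I I])
  finally show ?thesis by simp
qed



context
  fixes N :: nat and w lam p qs :: "nat \<Rightarrow> real" and pol :: policy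
  assumes wpos: "\<forall>i<N. 0 < w i"
    and lamr: "\<forall>i<N. 0 < lam i \<and> lam i \<le> 1"
    and pr: "\<forall>i<N. 0 < p i \<and> p i \<le> 1"
    and feas: "lb_feasible N lam p qs"
    and pomw: "is_POMW N lam p (\<lambda>i. w i / (lam i * qs i)) pol"
begin

definition "eD H t i = measure_pmf.expectation (sys_pmf N lam p H) (\<lambda>om. real (ap_age pol om i t))"
definition "ed H t i = measure_pmf.expectation (sys_pmf N lam p H) (\<lambda>om. real (local_age om i t))"
definition "eU H t i = measure_pmf.expectation (sys_pmf N lam p H)
    (\<lambda>om. (if pol t (hist pol om t) = i then 1 else 0) * gain N lam p pol om t i)"
definition "eG H t i = measure_pmf.expectation (sys_pmf N lam p H) (\<lambda>om. gain N lam p pol om t i)"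

lemma qpos: "i < N \<Longrightarrow> 0 < qs i \<and> qs i \<le> lam i" using feas unfolding lb_feasible_def by auto

lemma R1:
  assumes "t < H" "i < N"
  shows "ed H (Suc t) i = ed H t i + 1 - lam i * ed H t i"
proof -
  have pt: "real (local_age om i (Suc t)) = real (local_age om i t) + 1 - (if fst om (t,i) then 1 else 0) * real (local_age om i t)" for om
    by (simp add: arrival_def)
  have "ed H (Suc t) i = ed H t i + 1 - measure_pmf.expectation (sys_pmf N lam p H)
          (\<lambda>om. (if fst om (t,i) then 1 else 0) * real (local_age om i t))"
    unfolding ed_def pt by (rule E_lin3[OF sys_finite])
  also have "measure_pmf.expectation (sys_pmf N lam p H)
          (\<lambda>om. (if fst om (t,i) then 1 else 0) * real (local_age om i t)) = lam i * ed H t i"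
    unfolding ed_def
  proof (rule indep_fst)
    fix a c b
    have ag: "agree t (a, c) (a((t,i):=b), c)" by (rule agree_upd_fst) simp
    show "real (local_age (a((t, i) := b), c) i t) = real (local_age (a, c) i t)"
      using agree_local[OF ag, of i] by simp
  qed (use assms lamr in auto)
  finally show ?thesis .
qed

lemma R2:
  assumes "t < H" "i < N"
  shows "eD H (Suc t) i = eD H t i + 1 - p i * eU H t i"
proof -
  let ?g = "\<lambda>om. (if pol t (hist pol om t) = i then 1 else 0) * (real (ap_age pol om i t) - real (local_age om i t))"
  have pt: "real (ap_age pol om i (Suc t)) = real (ap_age pol om i t) + 1 - (if snd om (t,i) then 1 else 0) * ?g om" for om
    by (simp add: success_def Let_def)
  have "eD H (Suc t) i = eD H t i + 1 - measure_pmf.expectation (sys_pmf N lam p H)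
          (\<lambda>om. (if snd om (t,i) then 1 else 0) * ?g om)"
    unfolding eD_def pt by (rule E_lin3[OF sys_finite])
  also have "measure_pmf.expectation (sys_pmf N lam p H)
          (\<lambda>om. (if snd om (t,i) then 1 else 0) * ?g om) = p i * measure_pmf.expectation (sys_pmf N lam p H) ?g"
  proof (rule indep_snd)
    fix a c b
    have ag: "agree t (a, c) (a, c((t,i):=b))" by (rule agree_upd_snd) simp
    show "?g (a, c((t, i) := b)) = ?g (a, c)"
      using agree_hist[OF ag, of pol] agree_ap[OF ag, of pol i] agree_local[OF ag, of i] by simp
  qed (use assms pr in auto)
  also have "measure_pmf.expectation (sys_pmf N lam p H) ?g = eU H t i"
    unfolding eU_def using tower_gain[where t=t and H=H and f="\<lambda>h. if pol t h = i then 1 else 0"] assms by simp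
  finally show ?thesis .
qed

lemma R3:
  assumes "t \<le> H"
  shows "eG H t i = eD H t i - ed H t i"
proof -
  have I: "integrable (sys_pmf N lam p H) F" for F :: "outcome \<Rightarrow> real" by (rule integrable_measure_pmf_finite[OF sys_finite])
  have "eG H t i = measure_pmf.expectation (sys_pmf N lam p H) (\<lambda>om. real (ap_age pol om i t) - real (local_age om i t))"
    unfolding eG_def using tower_gain[where t=t and H=H and f="\<lambda>_. 1"] assms by simp
  also have "\<dots> = eD H t i - ed H t i" unfolding eD_def ed_def by (rule Bochner_Integration.integral_diff[OF I I])
  finally show ?thesis .
qed

lemma R4:
  assumes "t \<le> H"
  shows "(\<Sum>i<N. w i / lam i * eG H t i) \<le> (\<Sum>i<N. w i / (lam i * qs i) * p i * eU H t i)"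
proof -
  let ?M = "sys_pmf N lam p H"
  have I: "integrable ?M F" for F :: "outcome \<Rightarrow> real" by (rule integrable_measure_pmf_finite[OF sys_finite])
  have "(\<Sum>i<N. w i / lam i * eG H t i) = measure_pmf.expectation ?M (\<lambda>om. \<Sum>i<N. w i / lam i * gain N lam p pol om t i)"
    unfolding eG_def by (simp add: Bochner_Integration.integral_sum[OF I])
  also have "\<dots> \<le> measure_pmf.expectation ?M (\<lambda>om. \<Sum>i<N. w i / (lam i * qs i) * p i * ((if pol t (hist pol om t) = i then 1 else 0) * gain N lam p pol om t i))"
  proof (rule E_mono_pmf[OF sys_finite])
    fix om assume om: "om \<in> set_pmf ?M"
    define j where "j = pol t (hist pol om t)"
    define G where "G i = gain N lam p pol om t i" for i
    define be where "be i = w i / (lam i * qs i)" for i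
    have P: "j < N" "\<And>i. i < N \<Longrightarrow> be i * p i * G i \<le> be j * p j * G j"
      using pomw_H[OF pomw om assms] unfolding j_def G_def be_def by auto
    have Gn: "\<And>i. 0 \<le> G i" unfolding G_def using gain_nonneg[OF om assms] .
    have X0: "0 \<le> be j * p j * G j" unfolding be_def using P(1) wpos lamr pr qpos[OF P(1)] Gn[of j]
      by (intro mult_nonneg_nonneg divide_nonneg_nonneg) auto
    have "(\<Sum>i<N. w i / lam i * G i) = (\<Sum>i<N. (qs i / p i) * (be i * p i * G i))"
    proof (rule sum.cong[OF refl])
      fix i assume "i \<in> {..<N}"
      then have "0 < qs i" "0 < p i" "0 < lam i" using qpos pr lamr by auto
      then show "w i / lam i * G i = qs i / p i * (be i * p i * G i)" unfolding be_def by (simp add: field_simps)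
    qed
    also have "\<dots> \<le> (\<Sum>i<N. (qs i / p i) * (be j * p j * G j))"
    proof (rule sum_mono)
      fix i assume "i \<in> {..<N}"
      then have "0 \<le> qs i / p i" using qpos pr by (auto intro!: divide_nonneg_nonneg less_imp_le)
      with P(2) \<open>i \<in> {..<N}\<close> show "qs i / p i * (be i * p i * G i) \<le> qs i / p i * (be j * p j * G j)"
        by (intro mult_left_mono) auto
    qed
    also have "\<dots> = (\<Sum>i<N. qs i / p i) * (be j * p j * G j)" by (simp add: sum_distrib_right)
    also have "\<dots> \<le> 1 * (be j * p j * G j)"
      using feas X0 unfolding lb_feasible_def by (intro mult_right_mono) auto
    also have "\<dots> = (\<Sum>i<N. be i * p i * ((if j = i then 1 else 0) * G i))"
    proof -
      have "(\<Sum>i<N. be i * p i * ((if j = i then 1 else 0) * G i)) = (\<Sum>i<N. if j = i then be i * p i * G i else 0)"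
        by (intro sum.cong) auto
      also have "\<dots> = be j * p j * G j" using P(1) by (simp add: sum.delta)
      finally show ?thesis by simp
    qed
    finally show "(\<Sum>i<N. w i / lam i * gain N lam p pol om t i) \<le> (\<Sum>i<N. w i / (lam i * qs i) * p i * ((if pol t (hist pol om t) = i then 1 else 0) * gain N lam p pol om t i))"
      unfolding j_def G_def be_def .
  qed
  also have "\<dots> = (\<Sum>i<N. w i / (lam i * qs i) * p i * eU H t i)"
    unfolding eU_def by (simp add: Bochner_Integration.integral_sum[OF I])
  finally show ?thesis .
qed


lemma ed0: "ed H 0 i = 1" unfolding ed_def by simp
lemma eD0: "eD H 0 i = 1" unfolding eD_def by simp

lemma ed_nonneg: "0 \<le> ed H t i"
  unfolding ed_def by (rule Bochner_Integration.integral_nonneg) simp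

lemma ed_le_eD: "ed H t i \<le> eD H t i"
  unfolding ed_def eD_def by (rule E_mono_pmf[OF sys_finite]) (simp add: local_le_ap)

lemma R5:
  assumes "i < N"
  shows "t \<le> H \<Longrightarrow> ed H t i \<le> 1 / lam i"
proof (induction t)
  case 0
  then show ?case using lamr assms by (simp add: ed0)
next
  case (Suc t)
  then have IH: "ed H t i \<le> 1 / lam i" by simp
  have l: "0 < lam i" "lam i \<le> 1" using lamr assms by auto
  have "ed H (Suc t) i = (1 - lam i) * ed H t i + 1" using R1[of t H i] Suc.prems assms by (simp add: algebra_simps)
  also have "\<dots> \<le> (1 - lam i) * (1 / lam i) + 1" using IH l by (intro add_right_mono mult_left_mono) auto
  also have "\<dots> = 1 / lam i" using l by (simp add: field_simps)
  finally show ?case .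
qed

definition "Phi H t = (\<Sum>i<N. w i / (lam i * qs i) * (eD H t i - ed H t i))"

lemma Phi_step:
  assumes "t < H"
  shows "Phi H (Suc t) - Phi H t \<le> (\<Sum>i<N. w i / (qs i * lam i)) - (\<Sum>i<N. w i / lam i * (eD H t i - ed H t i))"
proof -
  have "Phi H (Suc t) - Phi H t = (\<Sum>i<N. w i / (lam i * qs i) * lam i * ed H t i) - (\<Sum>i<N. w i / (lam i * qs i) * p i * eU H t i)"
    unfolding Phi_def sum_subtractf[symmetric]
    by (intro sum.cong refl) (simp add: R1[OF assms] R2[OF assms] algebra_simps)
  also have "\<dots> \<le> (\<Sum>i<N. w i / (lam i * qs i) * lam i * ed H t i) - (\<Sum>i<N. w i / lam i * eG H t i)"
    using R4[of t H] assms by simp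
  also have "\<dots> \<le> (\<Sum>i<N. w i / (qs i * lam i)) - (\<Sum>i<N. w i / lam i * (eD H t i - ed H t i))"
  proof -
    have "(\<Sum>i<N. w i / (lam i * qs i) * lam i * ed H t i) \<le> (\<Sum>i<N. w i / (qs i * lam i))"
    proof (rule sum_mono)
      fix i assume i: "i \<in> {..<N}"
      then have l: "0 < lam i" "0 < qs i" "0 < w i" using lamr qpos wpos by auto
      have "w i / (lam i * qs i) * lam i * ed H t i = (w i / qs i) * ed H t i" using l by simp
      also have "\<dots> \<le> (w i / qs i) * (1 / lam i)"
        using R5[of i t H] i assms l by (intro mult_left_mono) auto
      also have "\<dots> = w i / (qs i * lam i)" by simp
      finally show "w i / (lam i * qs i) * lam i * ed H t i \<le> w i / (qs i * lam i)" .
    qed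
    moreover have "(\<Sum>i<N. w i / lam i * eG H t i) = (\<Sum>i<N. w i / lam i * (eD H t i - ed H t i))"
      using R3[of t H] assms by simp
    ultimately show ?thesis by linarith
  qed
  finally show ?thesis .
qed

lemma Phi0: "Phi H 0 = 0" unfolding Phi_def by (simp add: ed0 eD0)

lemma Phi_nonneg: "0 \<le> Phi H t"
  unfolding Phi_def
proof (rule sum_nonneg)
  fix i assume i: "i \<in> {..<N}"
  then have l: "0 < lam i" "0 < qs i" "0 < w i" using lamr qpos wpos by auto
  show "0 \<le> w i / (lam i * qs i) * (eD H t i - ed H t i)"
    using l ed_le_eD[of H t i] by (intro mult_nonneg_nonneg) auto
qed

lemma main_bound:
  "(\<Sum>t<H. \<Sum>i<N. w i * eD H t i) \<le> real H * (\<Sum>i<N. w i * (1 / (qs i * lam i) + 1 / lam i))"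
proof -
  define C1 where "C1 = (\<Sum>i<N. w i / (qs i * lam i))"
  define Z where "Z t = (\<Sum>i<N. w i / lam i * (eD H t i - ed H t i))" for t
  have "Phi H H - Phi H 0 = (\<Sum>t<H. Phi H (Suc t) - Phi H t)"
    by (rule sum_lessThan_telescope[symmetric])
  also have "\<dots> \<le> (\<Sum>t<H. C1 - Z t)"
    by (rule sum_mono) (use Phi_step in \<open>auto simp: C1_def Z_def\<close>)
  finally have "(\<Sum>t<H. Z t) \<le> real H * C1"
    using Phi0[of H] Phi_nonneg[of H H] by (simp add: sum_subtractf)
  moreover have "(\<Sum>t<H. \<Sum>i<N. w i * eD H t i) \<le> (\<Sum>t<H. Z t + (\<Sum>i<N. w i / lam i))"
  proof (rule sum_mono)
    fix t assume t: "t \<in> {..<H}"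
    have "(\<Sum>i<N. w i * eD H t i) \<le> (\<Sum>i<N. w i / lam i * (eD H t i - ed H t i) + w i / lam i)"
    proof (rule sum_mono)
      fix i assume i: "i \<in> {..<N}"
      then have l: "0 < lam i" "lam i \<le> 1" "0 < w i" using lamr wpos by auto
      have d: "0 \<le> eD H t i - ed H t i" using ed_le_eD[of H t i] by simp
      have "w i * eD H t i = w i * (eD H t i - ed H t i) + w i * ed H t i" by (simp add: algebra_simps)
      also have "w i * (eD H t i - ed H t i) \<le> w i / lam i * (eD H t i - ed H t i)"
        using l d by (intro mult_right_mono) (auto simp: field_simps)
      also have "w i * ed H t i \<le> w i * (1 / lam i)"
        using R5[of i t H] i t l by (intro mult_left_mono) auto
      finally show "w i * eD H t i \<le> w i / lam i * (eD H t i - ed H t i) + w i / lam i" by simp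
    qed
    then show "(\<Sum>i<N. w i * eD H t i) \<le> Z t + (\<Sum>i<N. w i / lam i)"
      unfolding Z_def by (simp add: sum.distrib)
  qed
  ultimately show ?thesis
    unfolding C1_def by (simp add: sum.distrib sum_distrib_left algebra_simps)
qed


lemma avg_bound:
  assumes T: "1 \<le> T"
  shows "avg_wAoI N w lam p pol T \<le> real (Suc T) * (\<Sum>i<N. w i * (1 / (qs i * lam i) + 1 / lam i)) / (real N * real T)"
proof -
  let ?K = "\<Sum>i<N. w i * (1 / (qs i * lam i) + 1 / lam i)"
  have I: "integrable (sys_pmf N lam p T) F" for F :: "outcome \<Rightarrow> real" by (rule integrable_measure_pmf_finite[OF sys_finite])
  have "measure_pmf.expectation (sys_pmf N lam p T) (\<lambda>om. \<Sum>t=1..T. \<Sum>i<N. w i * real (ap_age pol om i t))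
      = (\<Sum>t=1..T. \<Sum>i<N. w i * measure_pmf.expectation (sys_pmf N lam p T) (\<lambda>om. real (ap_age pol om i t)))"
    by (simp add: Bochner_Integration.integral_sum[OF I])
  also have "\<dots> = (\<Sum>t=1..T. \<Sum>i<N. w i * eD (Suc T) t i)"
  proof (intro sum.cong refl)
    fix t i assume "t \<in> {1..T}"
    then have tT: "t \<le> T" by simp
    have "measure_pmf.expectation (sys_pmf N lam p T) (\<lambda>om. real (ap_age pol om i t))
        = measure_pmf.expectation (sys_pmf N lam p (Suc T)) (\<lambda>om. real (ap_age pol om i t))"
      by (rule E_restrict) (use agree_ap agree_mono tT in \<open>auto\<close>)
    then show "w i * measure_pmf.expectation (sys_pmf N lam p T) (\<lambda>om. real (ap_age pol om i t)) = w i * eD (Suc T) t i"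
      unfolding eD_def by simp
  qed
  also have "\<dots> \<le> (\<Sum>t<Suc T. \<Sum>i<N. w i * eD (Suc T) t i)"
  proof (rule sum_mono2)
    show "\<And>t. t \<in> {..<Suc T} - {1..T} \<Longrightarrow> 0 \<le> (\<Sum>i<N. w i * eD (Suc T) t i)"
    proof -
      fix t
      show "0 \<le> (\<Sum>i<N. w i * eD (Suc T) t i)"
      proof (rule sum_nonneg)
        fix i assume "i \<in> {..<N}"
        then show "0 \<le> w i * eD (Suc T) t i" using wpos ed_nonneg[of "Suc T" t i] ed_le_eD[of "Suc T" t i]
          by (intro mult_nonneg_nonneg) auto
      qed
    qed
  qed auto
  also have "\<dots> \<le> real (Suc T) * ?K" by (rule main_bound)
  finally have "measure_pmf.expectation (sys_pmf N lam p T) (\<lambda>om. \<Sum>t=1..T. \<Sum>i<N. w i * real (ap_age pol om i t)) \<le> real (Suc T) * ?K" .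
  then show ?thesis unfolding avg_wAoI_def
    by (intro divide_right_mono) auto
qed

end



theorem corollary2:
  fixes N :: nat and w lam p qs :: "nat \<Rightarrow> real" and pol :: policy
  assumes "N \<ge> 1"
    and "\<forall>i<N. 0 < w i"
    and "\<forall>i<N. 0 < lam i \<and> lam i \<le> 1"
    and "\<forall>i<N. 0 < p i \<and> p i \<le> 1"
    and "lb_optimal N w lam p qs"
    and "is_POMW N lam p (\<lambda>i. w i / (lam i * qs i)) pol"
  shows "longterm_wAoI N w lam p pol / ereal (lb_objective N w qs)
           < ereal (2 / Min (lam ` {..<N}))"
proof -
  have feas: "lb_feasible N lam p qs" using assms(5) unfolding lb_optimal_def by simp
  have q: "\<And>i. i < N \<Longrightarrow> 0 < qs i" using feas unfolding lb_feasible_def by auto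
  define K where "K = (\<Sum>i<N. w i * (1 / (qs i * lam i) + 1 / lam i))"
  define lm where "lm = Min (lam ` {..<N})"
  define L where "L = lb_objective N w qs"
  have ne: "lam ` {..<N} \<noteq> {}" using assms(1) by (auto simp: lessThan_empty_iff)
  have lm_in: "lm \<in> lam ` {..<N}" unfolding lm_def by (rule Min_in) (use ne in auto)
  have lm_pos: "0 < lm" using lm_in assms(3) by auto
  have lm_le: "\<And>i. i < N \<Longrightarrow> lm \<le> lam i" unfolding lm_def by (rule Min_le) auto
  have Npos: "0 < real N" using assms(1) by simp
  have S1: "K \<le> (\<Sum>i<N. w i * (1 / qs i + 1)) / lm"
    unfolding K_def sum_divide_distrib
  proof (rule sum_mono)
    fix i assume i: "i \<in> {..<N}"
    then have l: "0 < lam i" "0 < qs i" "0 < w i" "lm \<le> lam i" using assms(2,3) q lm_le by auto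
    have "w i * (1 / (qs i * lam i) + 1 / lam i) = w i * (1 / qs i + 1) / lam i"
      using l by (simp add: field_simps)
    also have "\<dots> \<le> w i * (1 / qs i + 1) / lm"
      using l lm_pos by (intro divide_left_mono mult_nonneg_nonneg) auto
    finally show "w i * (1 / (qs i * lam i) + 1 / lam i) \<le> w i * (1 / qs i + 1) / lm" .
  qed
  have S2: "(\<Sum>i<N. w i * (1 / qs i + 1)) < (\<Sum>i<N. w i * (1 / qs i + 3))"
    by (rule sum_strict_mono) (use assms(1,2) in \<open>auto simp: lessThan_empty_iff\<close>)
  have L_def': "L = (\<Sum>i<N. w i * (1 / qs i + 3)) / (2 * real N)" unfolding L_def lb_objective_def by simp
  have Spos: "0 < (\<Sum>i<N. w i * (1 / qs i + 3))"
  proof (rule sum_pos)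
    fix i assume i: "i \<in> {..<N}"
    then have "0 < qs i" "0 < w i" using q assms(2) by auto
    then have "0 < 1 / qs i + 3" by (simp add: add_pos_pos)
    then show "0 < w i * (1 / qs i + 3)" using \<open>0 < w i\<close> by (intro mult_pos_pos) auto
  qed (use assms(1) in \<open>auto simp: lessThan_empty_iff\<close>)
  have Lpos: "0 < L" unfolding L_def' using Spos Npos by simp
  have key: "K / real N / L < 2 / lm"
  proof -
    have "K < (\<Sum>i<N. w i * (1 / qs i + 3)) / lm"
      using S1 S2 lm_pos by (smt (verit) divide_strict_right_mono)
    also have "\<dots> = 2 * real N * L / lm" unfolding L_def' using Npos by simp
    finally have "K < 2 * real N * L / lm" .
    then have "K / (real N * L) < 2 / lm"
      using Npos Lpos lm_pos by (simp add: field_simps)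
    then show ?thesis by (simp add: field_simps)
  qed
  have ev: "eventually (\<lambda>T. ereal (avg_wAoI N w lam p pol T) \<le> ereal (K / real N + K / real N / real T)) sequentially"
  proof (rule eventually_sequentiallyI[of 1])
    fix T :: nat assume T: "1 \<le> T"
    have "avg_wAoI N w lam p pol T \<le> real (Suc T) * K / (real N * real T)"
      unfolding K_def by (rule avg_bound[OF assms(2,3,4) feas assms(6) T])
    also have "\<dots> = K / real N + K / real N / real T"
      using T Npos by (simp add: field_simps)
    finally show "ereal (avg_wAoI N w lam p pol T) \<le> ereal (K / real N + K / real N / real T)" by simp
  qed
  have lim: "(\<lambda>T. ereal (K / real N + K / real N / real T)) \<longlonglongrightarrow> ereal (K / real N)"
  proof -
    have "(\<lambda>T. K / real N + K / real N / real T) \<longlonglongrightarrow> K / real N + 0"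
      by (intro tendsto_intros)
    then show ?thesis by simp
  qed
  have LS: "longterm_wAoI N w lam p pol \<le> ereal (K / real N)"
  proof -
    have "longterm_wAoI N w lam p pol \<le> limsup (\<lambda>T. ereal (K / real N + K / real N / real T))"
      unfolding longterm_wAoI_def by (rule Limsup_mono[OF ev])
    also have "\<dots> = ereal (K / real N)" by (rule lim_imp_Limsup[OF _ lim]) simp
    finally show ?thesis .
  qed
  have "longterm_wAoI N w lam p pol / ereal L \<le> ereal (K / real N) / ereal L"
    using LS Lpos by (intro ereal_divide_right_mono) auto
  also have "\<dots> = ereal (K / real N / L)" using Lpos by simp
  also have "\<dots> < ereal (2 / lm)" using key by simp
  finally show ?thesis unfolding L_def lm_def .
qed


end
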